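(* Let $G$ be a compact, totally disconnected group and $\alpha$ an automorphism of $G$. Then there is an inverse system $\{(G_i,\alpha_i),\varphi_{ij},\mathcal{I}\}$ of compact groups $G_i$ with automorphisms $\alpha_i$, indexed by a directed set $\mathcal{I}$, with bonding homomorphisms $\varphi_{ij}$ satisfying $\varphi_{ij}\circ\alpha_j=\alpha_i\circ\varphi_{ij}$, such that each pair $(G_i,\alpha_i)$ has finite depth and $(G,\alpha)\cong\varprojlim(G_i,\alpha_i)$, i.e. $G$ is isomorphic as a topological group to the inverse limit via an isomorphism intertwining $\alpha$ with the automorphism induced by the $\alpha_i$.
   Context: A pair $(K,\beta)$, with $K$ a compact group and $\beta$ an automorphism, has finite depth if there is an open subgroup $V\le K$ with $\bigcap_{k\in\mathbb{Z}}\beta^k(V)=\{1\}$. *)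

theory Defs
  imports "HOL-Analysis.Analysis" "HOL-Algebra.Group"
begin

definition topological_group :: "('a, 'b) monoid_scheme \<Rightarrow> 'a topology \<Rightarrow> bool" where
  "topological_group G T \<longleftrightarrow> group G \<and> topspace T = carrier G \<and>
     continuous_map (prod_topology T T) T (\<lambda>(x, y). x \<otimes>\<^bsub>G\<^esub> y) \<and>
     continuous_map T T (\<lambda>x. inv\<^bsub>G\<^esub> x)"

definition compact_group :: "('a, 'b) monoid_scheme \<Rightarrow> 'a topology \<Rightarrow> bool" where
  "compact_group G T \<longleftrightarrow> topological_group G T \<and> compact_space T \<and> Hausdorff_space T"

definition totally_disconnected_space :: "'a topology \<Rightarrow> bool" where
  "totally_disconnected_space T \<longleftrightarrow>
     (\<forall>x \<in> topspace T. connected_component_of_set T x = {x})"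

definition topgroup_automorphism :: "('a, 'b) monoid_scheme \<Rightarrow> 'a topology \<Rightarrow> ('a \<Rightarrow> 'a) \<Rightarrow> bool" where
  "topgroup_automorphism G T \<beta> \<longleftrightarrow> \<beta> \<in> iso G G \<and> homeomorphic_map T T \<beta>"

definition aut_power :: "('a, 'b) monoid_scheme \<Rightarrow> ('a \<Rightarrow> 'a) \<Rightarrow> int \<Rightarrow> 'a \<Rightarrow> 'a" where
  "aut_power G \<beta> k = (if 0 \<le> k then \<beta> ^^ nat k else (inv_into (carrier G) \<beta>) ^^ nat (- k))"

definition finite_depth :: "('a, 'b) monoid_scheme \<Rightarrow> 'a topology \<Rightarrow> ('a \<Rightarrow> 'a) \<Rightarrow> bool" where
  "finite_depth G T \<beta> \<longleftrightarrow>
     (\<exists>V. subgroup V G \<and> openin T V \<and> (\<Inter>k::int. aut_power G \<beta> k ` V) = {\<one>\<^bsub>G\<^esub>})"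

definition directed_set :: "'i set \<Rightarrow> ('i \<Rightarrow> 'i \<Rightarrow> bool) \<Rightarrow> bool" where
  "directed_set I rel \<longleftrightarrow> I \<noteq> {} \<and> (\<forall>i\<in>I. rel i i) \<and>
     (\<forall>i\<in>I. \<forall>j\<in>I. \<forall>k\<in>I. rel i j \<longrightarrow> rel j k \<longrightarrow> rel i k) \<and>
     (\<forall>i\<in>I. \<forall>j\<in>I. \<exists>k\<in>I. rel i k \<and> rel j k)"

definition inverse_system_aut ::
  "'i set \<Rightarrow> ('i \<Rightarrow> 'i \<Rightarrow> bool) \<Rightarrow> ('i \<Rightarrow> ('c, 'd) monoid_scheme) \<Rightarrow> ('i \<Rightarrow> 'c topology)
   \<Rightarrow> ('i \<Rightarrow> 'c \<Rightarrow> 'c) \<Rightarrow> ('i \<Rightarrow> 'i \<Rightarrow> 'c \<Rightarrow> 'c) \<Rightarrow> bool" where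
  "inverse_system_aut I rel Gs Ts \<alpha>s \<phi> \<longleftrightarrow>
     directed_set I rel \<and>
     (\<forall>i\<in>I. compact_group (Gs i) (Ts i) \<and> topgroup_automorphism (Gs i) (Ts i) (\<alpha>s i)) \<and>
     (\<forall>i\<in>I. \<forall>j\<in>I. rel i j \<longrightarrow>
        \<phi> i j \<in> hom (Gs j) (Gs i) \<and> continuous_map (Ts j) (Ts i) (\<phi> i j) \<and>
        (\<forall>x\<in>carrier (Gs j). \<phi> i j (\<alpha>s j x) = \<alpha>s i (\<phi> i j x))) \<and>
     (\<forall>i\<in>I. \<forall>x\<in>carrier (Gs i). \<phi> i i x = x) \<and>
     (\<forall>i\<in>I. \<forall>j\<in>I. \<forall>k\<in>I. rel i j \<longrightarrow> rel j k \<longrightarrow>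
        (\<forall>x\<in>carrier (Gs k). \<phi> i j (\<phi> j k x) = \<phi> i k x))"

definition inv_limit ::
  "'i set \<Rightarrow> ('i \<Rightarrow> 'i \<Rightarrow> bool) \<Rightarrow> ('i \<Rightarrow> ('c, 'd) monoid_scheme) \<Rightarrow> ('i \<Rightarrow> 'i \<Rightarrow> 'c \<Rightarrow> 'c)
   \<Rightarrow> ('i \<Rightarrow> 'c) monoid" where
  "inv_limit I rel Gs \<phi> =
     \<lparr> carrier = {f \<in> (\<Pi>\<^sub>E i\<in>I. carrier (Gs i)).
                   \<forall>i\<in>I. \<forall>j\<in>I. rel i j \<longrightarrow> \<phi> i j (f j) = f i},
       mult = (\<lambda>f g. \<lambda>i\<in>I. f i \<otimes>\<^bsub>Gs i\<^esub> g i),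
       one = (\<lambda>i\<in>I. \<one>\<^bsub>Gs i\<^esub>) \<rparr>"

definition inv_limit_topology ::
  "'i set \<Rightarrow> ('i \<Rightarrow> 'i \<Rightarrow> bool) \<Rightarrow> ('i \<Rightarrow> ('c, 'd) monoid_scheme) \<Rightarrow> ('i \<Rightarrow> 'c topology)
   \<Rightarrow> ('i \<Rightarrow> 'i \<Rightarrow> 'c \<Rightarrow> 'c) \<Rightarrow> ('i \<Rightarrow> 'c) topology" where
  "inv_limit_topology I rel Gs Ts \<phi> =
     subtopology (product_topology Ts I) (carrier (inv_limit I rel Gs \<phi>))"

definition inv_limit_aut :: "'i set \<Rightarrow> ('i \<Rightarrow> 'c \<Rightarrow> 'c) \<Rightarrow> ('i \<Rightarrow> 'c) \<Rightarrow> ('i \<Rightarrow> 'c)" where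
  "inv_limit_aut I \<alpha>s f = (\<lambda>i\<in>I. \<alpha>s i (f i))"

end

theory Submission
  imports Defs "HOL-Algebra.Coset"
begin

lemma (in group) my_cancel1 [simp]: "x \<in> carrier G \<Longrightarrow> y \<in> carrier G \<Longrightarrow> inv x \<otimes> (x \<otimes> y) = y"
  by (simp add: m_assoc[symmetric])
lemma (in group) my_cancel2 [simp]: "x \<in> carrier G \<Longrightarrow> y \<in> carrier G \<Longrightarrow> x \<otimes> (inv x \<otimes> y) = y"
  by (simp add: m_assoc[symmetric])

locale pcg = group G for G :: "('a,'b) monoid_scheme" (structure) +
  fixes T :: "'a topology" and \<alpha> :: "'a \<Rightarrow> 'a"
  assumes cg: "compact_group G T"
    and td: "totally_disconnected_space T"
    and au: "topgroup_automorphism G T \<alpha>"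
begin

lemma topspace_T: "topspace T = carrier G"
  using cg by (simp add: compact_group_def topological_group_def)

lemma cpt: "compact_space T"
  using cg by (simp add: compact_group_def)

lemma haus: "Hausdorff_space T"
  using cg by (simp add: compact_group_def)

lemma mult_cont: "continuous_map (prod_topology T T) T (\<lambda>(x, y). x \<otimes> y)"
  using cg by (simp add: compact_group_def topological_group_def)

lemma inv_cont: "continuous_map T T (\<lambda>x. inv x)"
  using cg by (simp add: compact_group_def topological_group_def)

lemma rmult_cont: "a \<in> carrier G \<Longrightarrow> continuous_map T T (\<lambda>x. x \<otimes> a)"
proof -
  assume a: "a \<in> carrier G"
  have "continuous_map T (prod_topology T T) (\<lambda>x. (x, a))"
    by (intro continuous_map_pairedI continuous_map_id[unfolded id_def]) (simp add: a topspace_T)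
  from continuous_map_compose[OF this mult_cont] show ?thesis by (simp add: o_def)
qed

lemma lmult_cont: "a \<in> carrier G \<Longrightarrow> continuous_map T T (\<lambda>x. a \<otimes> x)"
proof -
  assume a: "a \<in> carrier G"
  have "continuous_map T (prod_topology T T) (\<lambda>x. (a, x))"
    by (intro continuous_map_pairedI continuous_map_id[unfolded id_def]) (simp add: a topspace_T)
  from continuous_map_compose[OF this mult_cont] show ?thesis by (simp add: o_def)
qed

lemma open_pre: "continuous_map T T f \<Longrightarrow> openin T S \<Longrightarrow> openin T {x \<in> carrier G. f x \<in> S}"
  using openin_continuous_map_preimage[of T T f S] by (simp add: topspace_T)

lemma closed_pre: "continuous_map T T f \<Longrightarrow> closedin T S \<Longrightarrow> closedin T {x \<in> carrier G. f x \<in> S}"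
  using closedin_continuous_map_preimage[of T T f S] by (simp add: topspace_T)

lemma clopen_sep:
  assumes z: "z \<in> carrier G" "z \<noteq> \<one>"
  shows "\<exists>C. closedin T C \<and> openin T C \<and> \<one> \<in> C \<and> z \<notin> C"
proof -
  let ?Q = "quasi_component_of_set T \<one>"
  have oneT: "\<one> \<in> topspace T" by (simp add: topspace_T)
  have Qin: "?Q \<in> quasi_components_of T"
    using quasi_component_in_quasi_components_of[of T "\<one>"] oneT by simp
  have "compactin T ?Q"
    using closedin_compact_space[OF cpt closedin_quasi_component_of] .
  then have "?Q \<in> connected_components_of T"
    using compact_quasi_eq_connected_components_of[OF compact_imp_locally_compact_space[OF cpt] haus] Qin
    by simp
  then obtain y where y: "y \<in> topspace T" "?Q = connected_component_of_set T y"
    unfolding connected_components_of_def by (auto simp del: )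
  have "\<one> \<in> ?Q" using oneT by simp
  then have "connected_component_of T y \<one>" using y(2) by simp
  then have "connected_component_of T y = connected_component_of T \<one>"
    using connected_component_of_equiv[of T y "\<one>"] by simp
  then have "?Q = {\<one>}" using td oneT y unfolding totally_disconnected_space_def by simp
  then have "\<not> quasi_component_of T \<one> z" using z by (simp add: set_eq_iff)
  then show ?thesis using oneT z topspace_T quasi_component_of[of T "\<one>" z] by blast
qed


lemma open_subgroup_sep:
  assumes z: "z \<in> carrier G" "z \<noteq> \<one>"
  shows "\<exists>H. subgroup H G \<and> openin T H \<and> z \<notin> H"
proof -
  obtain C where C: "closedin T C" "openin T C" "\<one> \<in> C" "z \<notin> C"
    using clopen_sep[OF z] by blast
  have Csub: "C \<subseteq> carrier G" using C(2) openin_subset topspace_T by metis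
  define S where "S = {p \<in> topspace (prod_topology T T). (\<lambda>(x, y). x \<otimes> y) p \<in> C}"
  have So: "openin (prod_topology T T) S"
    unfolding S_def by (rule openin_continuous_map_preimage[OF mult_cont C(2)])
  have "C \<times> {\<one>} \<subseteq> S" using Csub unfolding S_def by (auto simp: topspace_T)
  moreover have "compactin T C" by (rule closedin_compact_space[OF cpt C(1)])
  ultimately obtain U W where UW: "openin T U" "openin T W" "C \<subseteq> U" "\<one> \<in> W" "U \<times> W \<subseteq> S"
    using tube_lemma_left[OF So] topspace_T by (metis one_closed)
  have CW: "c \<otimes> w \<in> C" if "c \<in> C" "w \<in> W" for c w
  proof -
    have "(c, w) \<in> S" using UW(3,5) that by blast
    then show ?thesis unfolding S_def by simp
  qed
  define W' where "W' = W \<inter> {w \<in> carrier G. inv w \<in> W}"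
  have W'o: "openin T W'" unfolding W'_def
    by (intro openin_Int UW(2) open_pre[OF inv_cont UW(2)])
  have W'c: "W' \<subseteq> carrier G" unfolding W'_def by auto
  define H where "H = {x \<in> carrier G. C #> x = C}"
  have Hsub: "subgroup H G"
  proof
    show "H \<subseteq> carrier G" unfolding H_def by auto
    show "\<one> \<in> H" unfolding H_def using Csub by simp
    fix x y assume xy: "x \<in> H" "y \<in> H"
    then show "x \<otimes> y \<in> H" unfolding H_def using Csub
      by (metis (mono_tags, lifting) coset_mult_assoc m_closed mem_Collect_eq)
  next
    fix x assume x: "x \<in> H"
    then have xc: "x \<in> carrier G" and e: "C #> x = C" unfolding H_def by auto
    have "C #> inv x = (C #> x) #> inv x" using e by simp
    also have "\<dots> = C" using xc Csub by (simp add: coset_mult_assoc)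
    finally show "inv x \<in> H" unfolding H_def using xc by simp
  qed
  have W'H: "W' \<subseteq> H"
  proof
    fix w assume w: "w \<in> W'"
    then have wc: "w \<in> carrier G" "w \<in> W" "inv w \<in> W" unfolding W'_def by auto
    have "C #> w \<subseteq> C" using CW wc(2) unfolding r_coset_def by auto
    moreover have "C \<subseteq> C #> w"
    proof
      fix c assume c: "c \<in> C"
      then have "c \<otimes> inv w \<in> C" using CW wc by auto
      moreover have "c \<in> carrier G" using c Csub by auto
      then have "c = (c \<otimes> inv w) \<otimes> w" using wc(1) by (simp add: m_assoc)
      ultimately show "c \<in> C #> w" unfolding r_coset_def by blast
    qed
    ultimately show "w \<in> H" unfolding H_def using wc by auto
  qed
  have Ho: "openin T H"
  proof (subst openin_subopen, intro ballI)
    fix h assume h: "h \<in> H"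
    then have hc: "h \<in> carrier G" unfolding H_def by auto
    define Ob where "Ob = {x \<in> carrier G. x \<otimes> inv h \<in> W'}"
    have "openin T Ob" unfolding Ob_def using rmult_cont[of "inv h"] hc W'o open_pre by simp
    moreover have "h \<in> Ob" unfolding Ob_def using hc UW(4) W'_def by simp
    moreover have "Ob \<subseteq> H"
    proof
      fix x assume "x \<in> Ob"
      then have x: "x \<in> carrier G" "x \<otimes> inv h \<in> H" unfolding Ob_def using W'H by auto
      have "x = (x \<otimes> inv h) \<otimes> h" using x hc by (simp add: m_assoc)
      then show "x \<in> H" using subgroup.m_closed[OF Hsub x(2) h] by simp
    qed
    ultimately show "\<exists>Ob. openin T Ob \<and> h \<in> Ob \<and> Ob \<subseteq> H" by blast
  qed
  have "z \<notin> H"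
  proof
    assume "z \<in> H"
    then have "C #> z = C" unfolding H_def by auto
    moreover have "\<one> \<otimes> z \<in> C #> z" using C(3) unfolding r_coset_def by blast
    ultimately show False using z C(4) by simp
  qed
  then show ?thesis using Hsub Ho by blast
qed

lemma conj_cont: "r \<in> carrier G \<Longrightarrow> continuous_map T T (\<lambda>x. r \<otimes> x \<otimes> inv r)"
  using continuous_map_compose[OF lmult_cont[of r] rmult_cont[of "inv r"]] by (simp add: o_def)

lemma open_normal_sub:
  assumes H: "subgroup H G" "openin T H"
  shows "\<exists>U. U \<lhd> G \<and> openin T U \<and> U \<subseteq> H"
proof -
  define K where "K = {x \<in> carrier G. \<forall>g\<in>carrier G. g \<otimes> x \<otimes> inv g \<in> H}"
  have Hc: "H \<subseteq> carrier G" using H(1) subgroup.subset by blast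
  have KH: "K \<subseteq> H" unfolding K_def by (auto dest: bspec[of _ _ "\<one>"])
  have Ksub: "subgroup K G"
  proof
    show "K \<subseteq> carrier G" unfolding K_def by auto
    show "\<one> \<in> K" unfolding K_def using subgroup.one_closed[OF H(1)] by simp
    fix x y assume xy: "x \<in> K" "y \<in> K"
    then have c: "x \<in> carrier G" "y \<in> carrier G" unfolding K_def by auto
    have "g \<otimes> (x \<otimes> y) \<otimes> inv g \<in> H" if g: "g \<in> carrier G" for g
    proof -
      have "g \<otimes> (x \<otimes> y) \<otimes> inv g = (g \<otimes> x \<otimes> inv g) \<otimes> (g \<otimes> y \<otimes> inv g)"
        using g c by (simp add: m_assoc)
      then show ?thesis using xy g subgroup.m_closed[OF H(1)] unfolding K_def by auto
    qed
    then show "x \<otimes> y \<in> K" unfolding K_def using c by auto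
  next
    fix x assume x: "x \<in> K"
    then have c: "x \<in> carrier G" unfolding K_def by auto
    have "g \<otimes> inv x \<otimes> inv g \<in> H" if g: "g \<in> carrier G" for g
    proof -
      have "g \<otimes> inv x \<otimes> inv g = inv (g \<otimes> x \<otimes> inv g)"
        using g c by (simp add: m_assoc inv_mult_group)
      then show ?thesis using x g subgroup.m_inv_closed[OF H(1)] unfolding K_def by auto
    qed
    then show "inv x \<in> K" unfolding K_def using c by auto
  qed
  have Kn: "K \<lhd> G"
    unfolding normal_inv_iff
  proof (intro conjI Ksub ballI)
    fix x h assume x: "x \<in> carrier G" and h: "h \<in> K"
    then have hc: "h \<in> carrier G" unfolding K_def by auto
    have "g \<otimes> (x \<otimes> h \<otimes> inv x) \<otimes> inv g \<in> H" if g: "g \<in> carrier G" for g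
    proof -
      have "g \<otimes> (x \<otimes> h \<otimes> inv x) \<otimes> inv g = (g \<otimes> x) \<otimes> h \<otimes> inv (g \<otimes> x)"
        using g x hc by (simp add: m_assoc inv_mult_group)
      then show ?thesis using h g x unfolding K_def by auto
    qed
    then show "x \<otimes> h \<otimes> inv x \<in> K" unfolding K_def using x hc by auto
  qed
  have cov: "carrier G \<subseteq> \<Union>((\<lambda>r. H #> r) ` carrier G)"
    using rcos_self[OF _ H(1)] by blast
  have opc: "openin T (H #> r)" if r: "r \<in> carrier G" for r
  proof -
    have "H #> r = {x \<in> carrier G. x \<otimes> inv r \<in> H}"
      using subgroup.rcos_module[OF H(1) is_group r] r_coset_subset_G[OF Hc r] by auto
    then show ?thesis using open_pre[OF rmult_cont[of "inv r"] H(2)] r by simp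
  qed
  obtain F where F: "finite F" "F \<subseteq> (\<lambda>r. H #> r) ` carrier G" "carrier G \<subseteq> \<Union>F"
    using cpt cov opc unfolding compact_space_def compactin_def topspace_T
    by (smt (verit, ccfv_threshold) imageE)
  obtain R where R: "R \<subseteq> carrier G" "finite R" "F = (\<lambda>r. H #> r) ` R"
    using finite_subset_image[OF F(1) F(2)] by blast
  have Keq: "K = \<Inter>(insert (carrier G) ((\<lambda>r. {x \<in> carrier G. r \<otimes> x \<otimes> inv r \<in> H}) ` R))"
  proof (rule equalityI; rule subsetI)
    fix x assume "x \<in> K" then show "x \<in> \<Inter>(insert (carrier G) ((\<lambda>r. {x \<in> carrier G. r \<otimes> x \<otimes> inv r \<in> H}) ` R))"
      unfolding K_def using R(1) by auto
  next
    fix x assume xin: "x \<in> \<Inter>(insert (carrier G) ((\<lambda>r. {x \<in> carrier G. r \<otimes> x \<otimes> inv r \<in> H}) ` R))"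
    then have xc: "x \<in> carrier G" and xr: "\<And>r. r \<in> R \<Longrightarrow> r \<otimes> x \<otimes> inv r \<in> H" by auto
    have "g \<otimes> x \<otimes> inv g \<in> H" if g: "g \<in> carrier G" for g
    proof -
      obtain r where r: "r \<in> R" "g \<in> H #> r" using F(3) R(3) g by blast
      have rc: "r \<in> carrier G" using r R(1) by auto
      have hH: "g \<otimes> inv r \<in> H" using subgroup.rcos_module_imp[OF H(1) is_group rc r(2)] .
      have "g \<otimes> x \<otimes> inv g = (g \<otimes> inv r) \<otimes> (r \<otimes> x \<otimes> inv r) \<otimes> inv (g \<otimes> inv r)"
        using g rc xc by (simp add: m_assoc inv_mult_group)
      then show ?thesis using hH xr[OF r(1)] subgroup.m_closed[OF H(1)] subgroup.m_inv_closed[OF H(1)]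
        by simp
    qed
    then show "x \<in> K" unfolding K_def using xc by auto
  qed
  have "openin T K"
    unfolding Keq
  proof (rule openin_Inter)
    show "finite (insert (carrier G) ((\<lambda>r. {x \<in> carrier G. r \<otimes> x \<otimes> inv r \<in> H}) ` R))" using R(2) by simp
  next
    fix X assume "X \<in> insert (carrier G) ((\<lambda>r. {x \<in> carrier G. r \<otimes> x \<otimes> inv r \<in> H}) ` R)"
    then show "openin T X" using R(1) open_pre[OF conj_cont H(2)] openin_topspace[of T] topspace_T by auto
  qed simp
  then show ?thesis using Kn KH by blast
qed


definition "\<beta> = inv_into (carrier G) \<alpha>"
abbreviation "p \<equiv> aut_power G \<alpha>"

lemma a_iso: "\<alpha> \<in> iso G G" using au by (simp add: topgroup_automorphism_def)
lemma a_hom: "\<alpha> \<in> hom G G" using a_iso by (simp add: iso_def)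
lemma a_bij: "bij_betw \<alpha> (carrier G) (carrier G)" using a_iso by (simp add: iso_def)
lemma a_inj: "inj_on \<alpha> (carrier G)" using a_bij by (simp add: bij_betw_def)
lemma a_img: "\<alpha> ` carrier G = carrier G" using a_bij by (simp add: bij_betw_def)
lemma a_car: "x \<in> carrier G \<Longrightarrow> \<alpha> x \<in> carrier G" using a_img by blast
lemma b_iso: "\<beta> \<in> iso G G" unfolding \<beta>_def using iso_set_sym[OF a_iso] .
lemma b_hom: "\<beta> \<in> hom G G" using b_iso by (simp add: iso_def)
lemma b_car: "x \<in> carrier G \<Longrightarrow> \<beta> x \<in> carrier G"
  using b_hom by (simp add: hom_def Pi_def)
lemma ab: "x \<in> carrier G \<Longrightarrow> \<alpha> (\<beta> x) = x"
  unfolding \<beta>_def by (simp add: a_img f_inv_into_f)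
lemma ba: "x \<in> carrier G \<Longrightarrow> \<beta> (\<alpha> x) = x"
  unfolding \<beta>_def by (simp add: a_inj inv_into_f_f)

lemma a_cont: "continuous_map T T \<alpha>"
  using au homeomorphic_imp_continuous_map by (auto simp: topgroup_automorphism_def)

lemma b_cont: "continuous_map T T \<beta>"
proof -
  obtain g where g: "homeomorphic_maps T T \<alpha> g"
    using au by (auto simp: topgroup_automorphism_def homeomorphic_map_maps)
  then have gc: "continuous_map T T g" and gi: "\<And>y. y \<in> carrier G \<Longrightarrow> \<alpha> (g y) = y"
    and gcar: "\<And>y. y \<in> carrier G \<Longrightarrow> g y \<in> carrier G"
    by (auto simp: homeomorphic_maps_def topspace_T continuous_map_def)
  have "\<beta> y = g y" if "y \<in> carrier G" for y
    using gi[OF that] gcar[OF that] ba by metis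
  then show ?thesis using continuous_map_eq[OF gc] topspace_T by metis
qed

lemma funpow_hc:
  assumes "f \<in> hom G G" "continuous_map T T f"
  shows "f ^^ n \<in> hom G G \<and> continuous_map T T (f ^^ n)"
proof (induction n)
  case 0
  then show ?case using iso_set_refl[of G] by (simp add: iso_def)
next
  case (Suc n)
  have "(\<lambda>a. f ((f ^^ n) a)) \<in> hom G G" using Suc.IH assms(1) unfolding hom_def by (auto simp: Pi_def)
  then show ?case using continuous_map_compose[OF conjunct2[OF Suc.IH] assms(2)]
    by (simp add: o_def)
qed

lemma p_hc: "p k \<in> hom G G \<and> continuous_map T T (p k)"
  using funpow_hc[OF a_hom a_cont] funpow_hc[OF b_hom b_cont]
  by (simp add: aut_power_def \<beta>_def)

lemma p_hom: "p k \<in> hom G G" using p_hc by blast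
lemma p_cont: "continuous_map T T (p k)" using p_hc by blast
lemma p_car: "x \<in> carrier G \<Longrightarrow> p k x \<in> carrier G"
  using p_hom by (simp add: hom_def Pi_def)
lemma p_mult: "x \<in> carrier G \<Longrightarrow> y \<in> carrier G \<Longrightarrow> p k (x \<otimes> y) = p k x \<otimes> p k y"
  using p_hom by (simp add: hom_def)
lemma p_inv: "x \<in> carrier G \<Longrightarrow> p k (inv x) = inv (p k x)"
  using group_hom.hom_inv[of G G "p k" x] p_hom
  by (simp add: group_hom_def group_hom_axioms_def is_group)
lemma p_one: "p k \<one> = \<one>"
  using group_hom.hom_one[of G G "p k"] p_hom
  by (simp add: group_hom_def group_hom_axioms_def is_group)
lemma p0: "p 0 x = x" by (simp add: aut_power_def)

lemma p_succ: "x \<in> carrier G \<Longrightarrow> p (k + 1) x = \<alpha> (p k x)"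
proof -
  assume x: "x \<in> carrier G"
  show ?thesis
  proof (cases "k \<ge> 0")
    case True
    then have "nat (k + 1) = Suc (nat k)" by simp
    then show ?thesis using True by (simp add: aut_power_def)
  next
    case False
    show ?thesis
    proof (cases "k = -1")
      case True
      then show ?thesis using x by (simp add: aut_power_def \<beta>_def[symmetric] ab)
    next
      case False2: False
      then have n: "nat (- k) = Suc (nat (- (k + 1)))" using False by simp
      have "(\<beta> ^^ nat (- (k + 1))) x \<in> carrier G"
        using p_car[OF x, of "k+1"] False False2 by (simp add: aut_power_def \<beta>_def[symmetric])
      then show ?thesis using False False2 n
        by (simp add: aut_power_def \<beta>_def[symmetric] ab)
    qed
  qed
qed

lemma p_pred: "x \<in> carrier G \<Longrightarrow> p (k - 1) x = \<beta> (p k x)"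
proof -
  assume x: "x \<in> carrier G"
  have "p k x = \<alpha> (p (k - 1) x)" using p_succ[OF x, of "k - 1"] by simp
  then show ?thesis using ba p_car[OF x] by simp
qed

lemma p_add: "x \<in> carrier G \<Longrightarrow> p j (p k x) = p (j + k) x"
proof (induction j rule: int_induct[where k = 0])
  case base
  then show ?case by (simp add: p0)
next
  case (step1 i)
  then have x: "x \<in> carrier G" and IH: "p i (p k x) = p (i + k) x" by auto
  have "p (i + 1) (p k x) = \<alpha> (p i (p k x))" by (rule p_succ[OF p_car[OF x]])
  also have "\<dots> = \<alpha> (p (i + k) x)" using IH by simp
  also have "\<dots> = p ((i + k) + 1) x" using p_succ[OF x] by simp
  finally show ?case by (simp add: algebra_simps)
next
  case (step2 i)
  then show ?case using p_pred p_car
    by (metis add.commute add_diff_eq)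
qed


lemma rc_eq: "subgroup N G \<Longrightarrow> x \<in> carrier G \<Longrightarrow> y \<in> carrier G \<Longrightarrow> (N #> x = N #> y) \<longleftrightarrow> x \<otimes> inv y \<in> N"
proof
  assume N: "subgroup N G" and xy: "x \<in> carrier G" "y \<in> carrier G" and e: "N #> x = N #> y"
  have "x \<in> N #> y" using rcos_self[OF xy(1) N] e by simp
  then show "x \<otimes> inv y \<in> N" using subgroup.rcos_module_imp[OF N is_group xy(2)] by blast
next
  assume N: "subgroup N G" and xy: "x \<in> carrier G" "y \<in> carrier G" and m: "x \<otimes> inv y \<in> N"
  have "x \<in> N #> y" using subgroup.rcos_module_rev[OF N is_group xy(2) xy(1) m] .
  then show "N #> x = N #> y" using repr_independence[OF _ xy(2) N] by simp
qed

lemma rcos_as_pre: "subgroup N G \<Longrightarrow> r \<in> carrier G \<Longrightarrow> N #> r = {x \<in> carrier G. x \<otimes> inv r \<in> N}"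
proof (intro equalityI subsetI)
  fix x assume N: "subgroup N G" and r: "r \<in> carrier G" and x: "x \<in> N #> r"
  have "x \<in> carrier G" using r_coset_subset_G[OF subgroup.subset[OF N] r] x by blast
  then show "x \<in> {x \<in> carrier G. x \<otimes> inv r \<in> N}" using subgroup.rcos_module_imp[OF N is_group r x] by simp
next
  fix x assume N: "subgroup N G" and r: "r \<in> carrier G" and x: "x \<in> {x \<in> carrier G. x \<otimes> inv r \<in> N}"
  then show "x \<in> N #> r" using subgroup.rcos_module_rev[OF N is_group r] by simp
qed

lemma open_rcos: "subgroup N G \<Longrightarrow> openin T N \<Longrightarrow> r \<in> carrier G \<Longrightarrow> openin T (N #> r)"
  using rcos_as_pre open_pre[OF rmult_cont[of "inv r"]] by simp

lemma open_subgroup_closed: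
  assumes U: "subgroup U G" "openin T U"
  shows "closedin T U"
proof -
  have "topspace T - U = \<Union>((\<lambda>r. U #> r) ` (carrier G - U))"
  proof (intro equalityI subsetI)
    fix x assume "x \<in> topspace T - U"
    then show "x \<in> \<Union>((\<lambda>r. U #> r) ` (carrier G - U))" using rcos_self[OF _ U(1)] topspace_T by blast
  next
    fix x assume "x \<in> \<Union>((\<lambda>r. U #> r) ` (carrier G - U))"
    then obtain r where r: "r \<in> carrier G" "r \<notin> U" "x \<in> U #> r" by blast
    then have x: "x \<in> carrier G" "x \<otimes> inv r \<in> U" using rcos_as_pre[OF U(1) r(1)] by auto
    have "x \<notin> U"
    proof
      assume "x \<in> U"
      then have "inv x \<otimes> (x \<otimes> inv r) \<in> U" using x subgroup.m_closed[OF U(1)] subgroup.m_inv_closed[OF U(1)] by blast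
      then have "inv r \<in> U" using x r by simp
      then have "inv (inv r) \<in> U" using subgroup.m_inv_closed[OF U(1)] by blast
      then show False using r by simp
    qed
    then show "x \<in> topspace T - U" using x topspace_T by simp
  qed
  moreover have "openin T (\<Union>((\<lambda>r. U #> r) ` (carrier G - U)))"
    using open_rcos[OF U] by blast
  ultimately show ?thesis using subgroup.subset[OF U(1)] topspace_T by (simp add: closedin_def)
qed

definition NN :: "'a set \<Rightarrow> 'a set" where "NN U = {x \<in> carrier G. \<forall>k. p k x \<in> U}"

lemma p1: "x \<in> carrier G \<Longrightarrow> p 1 x = \<alpha> x" using p_succ[of x 0] by (simp add: p0)
lemma pm1: "x \<in> carrier G \<Longrightarrow> p (-1) x = \<beta> x" using p_pred[of x 0] by (simp add: p0)

lemma pre_subgroup: "subgroup U G \<Longrightarrow> subgroup {x \<in> carrier G. p k x \<in> U} G"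
  apply (rule subgroupI)
  by (auto simp: p_one p_mult p_inv subgroup.one_closed subgroup.m_closed subgroup.m_inv_closed)

context
  fixes U assumes Un: "U \<lhd> G" and Uo: "openin T U"
begin

lemma Us: "subgroup U G" using Un normal_imp_subgroup by blast

lemma NN_normal: "NN U \<lhd> G"
  unfolding normal_inv_iff
proof (intro conjI ballI)
  show "subgroup (NN U) G" unfolding NN_def
    apply (rule subgroupI)
    using Us by (auto simp: p_one p_mult p_inv subgroup.one_closed subgroup.m_closed subgroup.m_inv_closed)
next
  fix x h assume x: "x \<in> carrier G" and h: "h \<in> NN U"
  then have hc: "h \<in> carrier G" unfolding NN_def by auto
  have "p k (x \<otimes> h \<otimes> inv x) \<in> U" for k
  proof -
    have "p k (x \<otimes> h \<otimes> inv x) = p k x \<otimes> p k h \<otimes> inv (p k x)"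
      using x hc by (simp add: p_mult p_inv)
    then show ?thesis using Un h x p_car unfolding normal_inv_iff NN_def by auto
  qed
  then show "x \<otimes> h \<otimes> inv x \<in> NN U" unfolding NN_def using x hc by auto
qed

lemma NN_sub: "subgroup (NN U) G" using NN_normal normal_imp_subgroup by blast
lemma NN_car: "NN U \<subseteq> carrier G" unfolding NN_def by auto

lemma NN_stab: "x \<in> NN U \<Longrightarrow> p j x \<in> NN U"
  unfolding NN_def using p_add p_car by auto

lemma NN_in_pre: "NN U \<subseteq> {x \<in> carrier G. p k x \<in> U}" unfolding NN_def by auto

lemma NN_a: "\<alpha> ` NN U = NN U"
proof (intro equalityI subsetI)
  fix y assume "y \<in> \<alpha> ` NN U"
  then obtain x where "x \<in> NN U" "y = \<alpha> x" by blast
  then show "y \<in> NN U" using NN_stab[of x 1] p1 NN_car by auto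
next
  fix y assume y: "y \<in> NN U"
  then have "\<beta> y \<in> NN U" using NN_stab[of y "-1"] pm1 NN_car by auto
  moreover have "\<alpha> (\<beta> y) = y" using ab y NN_car by auto
  ultimately show "y \<in> \<alpha> ` NN U" by (metis image_eqI)
qed

lemma NN_b: "\<beta> ` NN U = NN U"
proof -
  have "\<forall>x\<in>NN U. \<beta> (\<alpha> x) = x" using ba NN_car by auto
  then have "\<beta> ` (\<alpha> ` NN U) = NN U" by (simp add: image_image)
  then show ?thesis using NN_a by simp
qed

lemma NN_closed: "closedin T (NN U)"
proof -
  have e: "NN U = (\<Inter>k. {x \<in> carrier G. p k x \<in> U})" unfolding NN_def by auto
  have "closedin T {x \<in> carrier G. p k x \<in> U}" for k
    using closed_pre[OF p_cont open_subgroup_closed[OF Us Uo]] .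
  then have "closedin T (\<Inter>k. {x \<in> carrier G. p k x \<in> U})"
    by (intro closedin_Inter) auto
  then show ?thesis using e by simp
qed

end


definition qT :: "'a set \<Rightarrow> 'a set topology" where
  "qT N = topology (\<lambda>W. W \<subseteq> rcosets N \<and> openin T {x \<in> carrier G. N #> x \<in> W})"

lemma qT_open: "openin (qT N) W \<longleftrightarrow> W \<subseteq> rcosets N \<and> openin T {x \<in> carrier G. N #> x \<in> W}"
proof -
  define L where "L = (\<lambda>W. W \<subseteq> rcosets N \<and> openin T {x \<in> carrier G. N #> x \<in> W})"
  have "istopology L"
    unfolding istopology_def
  proof (intro conjI allI impI)
    fix S S' assume a: "L S" "L S'"
    have "{x \<in> carrier G. N #> x \<in> S \<inter> S'} = {x \<in> carrier G. N #> x \<in> S} \<inter> {x \<in> carrier G. N #> x \<in> S'}"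
      by auto
    then show "L (S \<inter> S')"
      using a unfolding L_def by auto
  next
    fix K assume a: "\<forall>S\<in>K. L S"
    have "{x \<in> carrier G. N #> x \<in> \<Union>K} = \<Union>((\<lambda>S. {x \<in> carrier G. N #> x \<in> S}) ` K)"
      by auto
    moreover have "openin T (\<Union>((\<lambda>S. {x \<in> carrier G. N #> x \<in> S}) ` K))"
      apply (rule openin_Union) using a unfolding L_def by auto
    ultimately show "L (\<Union>K)"
      using a unfolding L_def by auto
  qed
  then show ?thesis unfolding qT_def L_def by simp
qed

lemma qT_top: "N \<subseteq> carrier G \<Longrightarrow> topspace (qT N) = rcosets N"
proof -
  assume N: "N \<subseteq> carrier G"
  have "{x \<in> carrier G. N #> x \<in> rcosets N} = topspace T" using rcosetsI[OF N] topspace_T by auto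
  then have "openin (qT N) (rcosets N)" using qT_open by auto
  moreover have "topspace (qT N) \<subseteq> rcosets N" using qT_open openin_topspace by blast
  ultimately show ?thesis using openin_subset by blast
qed

lemma q_cont: "N \<subseteq> carrier G \<Longrightarrow> continuous_map T (qT N) (\<lambda>x. N #> x)"
proof -
  assume Nc: "N \<subseteq> carrier G"
  show ?thesis unfolding continuous_map_def
  proof (intro conjI allI impI)
    show "(\<lambda>x. N #> x) \<in> topspace T \<rightarrow> topspace (qT N)"
      using qT_top[OF Nc] rcosetsI[OF Nc] topspace_T by auto
  next
    fix W assume "openin (qT N) W"
    then show "openin T {x \<in> topspace T. N #> x \<in> W}" using qT_open topspace_T by simp
  qed
qed

lemma q_img: "N \<subseteq> carrier G \<Longrightarrow> (\<lambda>x. N #> x) ` carrier G = rcosets N"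
  unfolding RCOSETS_def by auto

lemma qT_compact: "N \<subseteq> carrier G \<Longrightarrow> compact_space (qT N)"
proof -
  assume Nc: "N \<subseteq> carrier G"
  have "compactin (qT N) ((\<lambda>x. N #> x) ` topspace T)"
    by (rule image_compactin[OF _ q_cont[OF Nc]]) (use cpt in \<open>simp add: compact_space_def\<close>)
  then show ?thesis using q_img[OF Nc] qT_top[OF Nc] topspace_T by (simp add: compact_space_def)
qed

lemma sat_open:
  assumes N: "subgroup N G" and A: "openin T A" "A \<subseteq> carrier G"
  shows "openin (qT N) ((\<lambda>x. N #> x) ` A)"
  unfolding qT_open
proof
  show "(\<lambda>x. N #> x) ` A \<subseteq> rcosets N" using A(2) rcosetsI[OF subgroup.subset[OF N]] by auto
  show "openin T {x \<in> carrier G. N #> x \<in> (\<lambda>x. N #> x) ` A}"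
  proof (subst openin_subopen, intro ballI)
    fix x assume "x \<in> {x \<in> carrier G. N #> x \<in> (\<lambda>x. N #> x) ` A}"
    then obtain a where x: "x \<in> carrier G" "a \<in> A" "N #> x = N #> a" by auto
    have ac: "a \<in> carrier G" using x(2) A(2) by auto
    define Ob where "Ob = {y \<in> carrier G. a \<otimes> inv x \<otimes> y \<in> A}"
    have "openin T Ob" unfolding Ob_def using open_pre[OF lmult_cont A(1), of "a \<otimes> inv x"] x ac by simp
    moreover have "x \<in> Ob" unfolding Ob_def using x ac by (simp add: m_assoc)
    moreover have "Ob \<subseteq> {x \<in> carrier G. N #> x \<in> (\<lambda>x. N #> x) ` A}"
    proof
      fix y assume y: "y \<in> Ob"
      then have yc: "y \<in> carrier G" and yA: "a \<otimes> inv x \<otimes> y \<in> A" unfolding Ob_def by auto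
      have "x \<otimes> inv a \<in> N" using rc_eq[OF N x(1) ac] x(3) by simp
      then have "inv (x \<otimes> inv a) \<in> N" using subgroup.m_inv_closed[OF N] by blast
      then have "a \<otimes> inv x \<in> N" using x ac by (simp add: inv_mult_group)
      moreover have "(a \<otimes> inv x \<otimes> y) \<otimes> inv y = a \<otimes> inv x" using x ac yc by (simp add: m_assoc)
      ultimately have "N #> (a \<otimes> inv x \<otimes> y) = N #> y" using rc_eq[OF N, of "a \<otimes> inv x \<otimes> y" y] x ac yc by simp
      then show "y \<in> {x \<in> carrier G. N #> x \<in> (\<lambda>x. N #> x) ` A}" using yA yc by (metis (mono_tags, lifting) image_eqI mem_Collect_eq)
    qed
    ultimately show "\<exists>Ob. openin T Ob \<and> x \<in> Ob \<and> Ob \<subseteq> {x \<in> carrier G. N #> x \<in> (\<lambda>x. N #> x) ` A}" by blast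
  qed
qed

lemma qT_mult:
  assumes N: "N \<lhd> G"
  shows "continuous_map (prod_topology (qT N) (qT N)) (qT N) (\<lambda>(C, D). C <#> D)"
proof -
  have Ns: "subgroup N G" using N normal_imp_subgroup by blast
  have Nc: "N \<subseteq> carrier G" using subgroup.subset[OF Ns] .
  show ?thesis
    unfolding continuous_map_def
  proof (intro conjI allI impI)
    show "(\<lambda>(C, D). C <#> D) \<in> topspace (prod_topology (qT N) (qT N)) \<rightarrow> topspace (qT N)"
      unfolding Pi_def using normal.setmult_closed[OF N] by (clarsimp simp: qT_top[OF Nc])
  next
    fix W assume W: "openin (qT N) W"
    let ?P = "{z \<in> topspace (prod_topology (qT N) (qT N)). (\<lambda>(C, D). C <#> D) z \<in> W}"
    define Og where "Og = {x \<in> carrier G. N #> x \<in> W}"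
    have Oo: "openin T Og" using W qT_open Og_def by auto
    have Po: "openin (prod_topology T T) {z \<in> topspace (prod_topology T T). (\<lambda>(x, y). x \<otimes> y) z \<in> Og}"
      by (rule openin_continuous_map_preimage[OF mult_cont Oo])
    show "openin (prod_topology (qT N) (qT N)) ?P"
      unfolding openin_prod_topology_alt
    proof (intro allI impI)
      fix C D assume CD: "(C, D) \<in> ?P"
      have "C \<in> rcosets N" "D \<in> rcosets N" using CD by (simp_all add: qT_top[OF Nc])
      then obtain a b where ab: "a \<in> carrier G" "b \<in> carrier G" "C = N #> a" "D = N #> b"
        unfolding RCOSETS_def by blast
      have CDW: "C <#> D \<in> W" using CD by simp
      have "C <#> D = N #> (a \<otimes> b)" using ab normal.rcos_sum[OF N] by simp
      then have "a \<otimes> b \<in> Og" using CDW ab unfolding Og_def by simp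
      then have abP: "(a, b) \<in> {z \<in> topspace (prod_topology T T). (\<lambda>(x, y). x \<otimes> y) z \<in> Og}"
        using ab topspace_T by simp
      obtain A B where AB: "openin T A" "openin T B" "a \<in> A" "b \<in> B"
        "A \<times> B \<subseteq> {z \<in> topspace (prod_topology T T). (\<lambda>(x, y). x \<otimes> y) z \<in> Og}"
        using Po[unfolded openin_prod_topology_alt, rule_format, OF abP] by blast
      have Ac: "A \<subseteq> carrier G" "B \<subseteq> carrier G" using AB(1,2) openin_subset topspace_T by metis+
      have "openin (qT N) ((\<lambda>x. N #> x) ` A)" "openin (qT N) ((\<lambda>x. N #> x) ` B)"
        using sat_open[OF Ns AB(1) Ac(1)] sat_open[OF Ns AB(2) Ac(2)] by auto
      moreover have "C \<in> (\<lambda>x. N #> x) ` A" "D \<in> (\<lambda>x. N #> x) ` B" using ab AB by auto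
      moreover have "(\<lambda>x. N #> x) ` A \<times> (\<lambda>x. N #> x) ` B \<subseteq> ?P"
      proof (rule subsetI)
        fix z assume "z \<in> (\<lambda>x. N #> x) ` A \<times> (\<lambda>x. N #> x) ` B"
        then obtain a' b' where ab': "a' \<in> A" "b' \<in> B" and z: "z = (N #> a', N #> b')" by blast
        then have c: "a' \<in> carrier G" "b' \<in> carrier G" using Ac by auto
        have "(a', b') \<in> {z \<in> topspace (prod_topology T T). (\<lambda>(x, y). x \<otimes> y) z \<in> Og}"
          using AB(5) ab' by blast
        then have "a' \<otimes> b' \<in> Og" by simp
        then have "(N #> a') <#> (N #> b') \<in> W" using normal.rcos_sum[OF N c] unfolding Og_def by simp
        then show "z \<in> ?P" using c rcosetsI[OF Nc] z by (simp add: qT_top[OF Nc])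
      qed
      ultimately show "\<exists>U V. openin (qT N) U \<and> openin (qT N) V \<and> C \<in> U \<and> D \<in> V \<and> U \<times> V \<subseteq> ?P"
        by blast
    qed
  qed
qed

lemma qT_pre_cont:
  assumes Nc: "N \<subseteq> carrier G" and f: "\<And>C. C \<in> rcosets N \<Longrightarrow> f C \<in> rcosets N"
    and g: "continuous_map T T g" and fg: "\<And>x. x \<in> carrier G \<Longrightarrow> f (N #> x) = N #> g x"
  shows "continuous_map (qT N) (qT N) f"
  unfolding continuous_map_def
proof (intro conjI allI impI)
  show "f \<in> topspace (qT N) \<rightarrow> topspace (qT N)" using f qT_top[OF Nc] by auto
next
  fix W assume W: "openin (qT N) W"
  have "{x \<in> carrier G. N #> x \<in> {C \<in> topspace (qT N). f C \<in> W}} = {x \<in> carrier G. g x \<in> {x \<in> carrier G. N #> x \<in> W}}"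
  proof (intro equalityI subsetI)
    fix x assume "x \<in> {x \<in> carrier G. N #> x \<in> {C \<in> topspace (qT N). f C \<in> W}}"
    then have x: "x \<in> carrier G" "f (N #> x) \<in> W" by auto
    have "g x \<in> carrier G" using g x(1) topspace_T by (auto simp: continuous_map_def)
    then show "x \<in> {x \<in> carrier G. g x \<in> {x \<in> carrier G. N #> x \<in> W}}" using x fg by simp
  next
    fix x assume "x \<in> {x \<in> carrier G. g x \<in> {x \<in> carrier G. N #> x \<in> W}}"
    then have x: "x \<in> carrier G" "N #> g x \<in> W" by auto
    then show "x \<in> {x \<in> carrier G. N #> x \<in> {C \<in> topspace (qT N). f C \<in> W}}"
      using fg[OF x(1)] rcosetsI[OF Nc x(1)] qT_top[OF Nc] by simp
  qed
  moreover have "openin T {x \<in> carrier G. g x \<in> {x \<in> carrier G. N #> x \<in> W}}"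
    using open_pre[OF g] W qT_open by blast
  moreover have "{C \<in> topspace (qT N). f C \<in> W} \<subseteq> rcosets N" using qT_top[OF Nc] by auto
  ultimately show "openin (qT N) {C \<in> topspace (qT N). f C \<in> W}" using qT_open by simp
qed

lemma qT_inv:
  assumes N: "N \<lhd> G"
  shows "continuous_map (qT N) (qT N) (\<lambda>C. inv\<^bsub>G Mod N\<^esub> C)"
proof -
  have Nc: "N \<subseteq> carrier G" using N normal_imp_subgroup subgroup.subset by blast
  show ?thesis
  proof (rule qT_pre_cont[OF Nc _ inv_cont])
    fix C assume "C \<in> rcosets N"
    then show "inv\<^bsub>G Mod N\<^esub> C \<in> rcosets N" using normal.inv_FactGroup[OF N] normal.setinv_closed[OF N]
      by (simp add: FactGroup_def)
  next
    fix x assume x: "x \<in> carrier G"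
    then show "inv\<^bsub>G Mod N\<^esub> (N #> x) = N #> inv x"
      using normal.inv_FactGroup[OF N] normal.rcos_inv[OF N x] rcosetsI[OF Nc x]
      by (simp add: FactGroup_def)
  qed
qed

lemma hom_rcos:
  assumes f: "f \<in> hom G G" and N: "f ` N = N" "N \<subseteq> carrier G" and x: "x \<in> carrier G"
  shows "f ` (N #> x) = N #> f x"
proof -
  have "f ` (N #> x) = (\<lambda>n. f n \<otimes> f x) ` N" unfolding r_coset_def using f N x
    by (auto simp: hom_def subset_iff image_iff)
  also have "\<dots> = (f ` N) #> f x" unfolding r_coset_def by auto
  finally show ?thesis using N by simp
qed


lemma Mod_carrier: "carrier (G Mod N) = rcosets N" by (simp add: FactGroup_def)
lemma Mod_mult: "C \<otimes>\<^bsub>G Mod N\<^esub> D = C <#> D" by (simp add: FactGroup_def)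
lemma Mod_one: "\<one>\<^bsub>G Mod N\<^esub> = N" by (simp add: FactGroup_def)

lemma Mod_inv: "N \<lhd> G \<Longrightarrow> x \<in> carrier G \<Longrightarrow> inv\<^bsub>G Mod N\<^esub> (N #> x) = N #> inv x"
proof -
  assume N: "N \<lhd> G" and x: "x \<in> carrier G"
  have Nc: "N \<subseteq> carrier G" using N normal_imp_subgroup subgroup.subset by blast
  have "N #> x \<in> carrier (G Mod N)" using rcosetsI[OF Nc x] by (simp add: Mod_carrier)
  then have "inv\<^bsub>G Mod N\<^esub> (N #> x) = set_inv (N #> x)" by (rule normal.inv_FactGroup[OF N])
  also have "\<dots> = N #> inv x" by (rule normal.rcos_inv[OF N x])
  finally show ?thesis .
qed

lemma funpow_rcos:
  assumes "\<And>x. x \<in> carrier G \<Longrightarrow> g (N #> x) = N #> f x" "\<And>x. x \<in> carrier G \<Longrightarrow> f x \<in> carrier G"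
    and "x \<in> carrier G"
  shows "(g ^^ n) (N #> x) = N #> (f ^^ n) x \<and> (f ^^ n) x \<in> carrier G"
proof (induction n)
  case 0 then show ?case using assms(3) by simp
next
  case (Suc n) then show ?case using assms(1,2) by simp
qed

context
  fixes U assumes Un: "U \<lhd> G" and Uo: "openin T U"
begin

lemma Us': "subgroup U G" using Un normal_imp_subgroup by blast
lemma Uc: "U \<subseteq> carrier G" using Us' subgroup.subset by blast
lemma Nn: "NN U \<lhd> G" by (rule NN_normal[OF Un Uo])
lemma Ns: "subgroup (NN U) G" by (rule NN_sub[OF Un Uo])
lemma Nc: "NN U \<subseteq> carrier G" by (rule NN_car[OF Un Uo])

lemma q_Haus: "Hausdorff_space (qT (NN U))"
  unfolding Hausdorff_space_def
proof (intro allI impI)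
  fix C D assume CD: "C \<in> topspace (qT (NN U)) \<and> D \<in> topspace (qT (NN U)) \<and> C \<noteq> D"
  then have "C \<in> rcosets (NN U)" "D \<in> rcosets (NN U)" by (simp_all add: qT_top[OF Nc])
  then obtain a b where ab: "a \<in> carrier G" "b \<in> carrier G" "C = NN U #> a" "D = NN U #> b"
    unfolding RCOSETS_def by blast
  have abc: "a \<otimes> inv b \<in> carrier G" using ab by simp
  have "a \<otimes> inv b \<notin> NN U" using rc_eq[OF Ns ab(1,2)] ab CD by simp
  then obtain k where k: "p k (a \<otimes> inv b) \<notin> U" using abc unfolding NN_def by blast
  define Uk where "Uk = {x \<in> carrier G. p k x \<in> U}"
  have Uks: "subgroup Uk G" unfolding Uk_def by (rule pre_subgroup[OF Us'])
  have Uko: "openin T Uk" unfolding Uk_def by (rule open_pre[OF p_cont Uo])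
  have NUk: "NN U \<subseteq> Uk" unfolding Uk_def by (rule NN_in_pre[OF Un Uo])
  have abU: "a \<otimes> inv b \<notin> Uk" using k unfolding Uk_def by simp
  have Ao: "openin T (Uk #> a)" "openin T (Uk #> b)" using open_rcos[OF Uks Uko] ab by auto
  have Ac: "Uk #> a \<subseteq> carrier G" "Uk #> b \<subseteq> carrier G"
    using r_coset_subset_G[OF subgroup.subset[OF Uks]] ab by auto
  let ?A = "(\<lambda>x. NN U #> x) ` (Uk #> a)" and ?B = "(\<lambda>x. NN U #> x) ` (Uk #> b)"
  have "openin (qT (NN U)) ?A" "openin (qT (NN U)) ?B"
    using sat_open[OF Ns Ao(1) Ac(1)] sat_open[OF Ns Ao(2) Ac(2)] by auto
  moreover have "C \<in> ?A" "D \<in> ?B" using ab rcos_self[OF _ Uks] by auto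
  moreover have "disjnt ?A ?B"
  proof (unfold disjnt_def, rule equals0I)
    fix E assume E: "E \<in> ?A \<inter> ?B"
    then obtain z1 z2 where z: "z1 \<in> Uk #> a" "z2 \<in> Uk #> b" "E = NN U #> z1" "E = NN U #> z2" by blast
    have zc: "z1 \<in> carrier G" "z2 \<in> carrier G" using z Ac by auto
    have z1: "z1 \<otimes> inv a \<in> Uk" using z(1) rcos_as_pre[OF Uks ab(1)] by auto
    have z2: "z2 \<otimes> inv b \<in> Uk" using z(2) rcos_as_pre[OF Uks ab(2)] by auto
    have "z1 \<otimes> inv z2 \<in> NN U" using rc_eq[OF Ns zc] z by simp
    then have z12: "z1 \<otimes> inv z2 \<in> Uk" using NUk by auto
    have i1: "inv (z1 \<otimes> inv a) \<in> Uk" by (rule subgroup.m_inv_closed[OF Uks z1])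
    have "inv (z1 \<otimes> inv a) \<otimes> (z1 \<otimes> inv z2) \<in> Uk" by (rule subgroup.m_closed[OF Uks i1 z12])
    then have "inv (z1 \<otimes> inv a) \<otimes> (z1 \<otimes> inv z2) \<otimes> (z2 \<otimes> inv b) \<in> Uk"
      by (rule subgroup.m_closed[OF Uks _ z2])
    moreover have "inv (z1 \<otimes> inv a) \<otimes> (z1 \<otimes> inv z2) \<otimes> (z2 \<otimes> inv b) = a \<otimes> inv b"
      using zc ab by (simp add: inv_mult_group m_assoc)
    ultimately show False using abU by simp
  qed
  ultimately show "\<exists>A B. openin (qT (NN U)) A \<and> openin (qT (NN U)) B \<and> C \<in> A \<and> D \<in> B \<and> disjnt A B"
    by blast
qed

lemma aN_rcos: "x \<in> carrier G \<Longrightarrow> \<alpha> ` (NN U #> x) = NN U #> \<alpha> x"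
  by (rule hom_rcos[OF a_hom NN_a[OF Un Uo] Nc])
lemma bN_rcos: "x \<in> carrier G \<Longrightarrow> \<beta> ` (NN U #> x) = NN U #> \<beta> x"
  by (rule hom_rcos[OF b_hom NN_b[OF Un Uo] Nc])

lemma aN_maps: "C \<in> rcosets (NN U) \<Longrightarrow> \<alpha> ` C \<in> rcosets (NN U)"
proof -
  assume "C \<in> rcosets (NN U)"
  then obtain x where x: "x \<in> carrier G" "C = NN U #> x" unfolding RCOSETS_def by blast
  then show ?thesis using aN_rcos[OF x(1)] rcosetsI[OF Nc a_car[OF x(1)]] by simp
qed
lemma bN_maps: "C \<in> rcosets (NN U) \<Longrightarrow> \<beta> ` C \<in> rcosets (NN U)"
proof -
  assume "C \<in> rcosets (NN U)"
  then obtain x where x: "x \<in> carrier G" "C = NN U #> x" unfolding RCOSETS_def by blast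
  then show ?thesis using bN_rcos[OF x(1)] rcosetsI[OF Nc b_car[OF x(1)]] by simp
qed

lemma rcos_sub: "C \<in> rcosets (NN U) \<Longrightarrow> C \<subseteq> carrier G"
  unfolding RCOSETS_def using r_coset_subset_G[OF Nc] by auto

lemma aN_inj: "inj_on (\<lambda>C. \<alpha> ` C) (rcosets (NN U))"
  unfolding inj_on_def using inj_on_image_eq_iff[OF a_inj] rcos_sub by blast

lemma ba_img: "C \<in> rcosets (NN U) \<Longrightarrow> \<beta> ` (\<alpha> ` C) = C"
proof -
  assume C: "C \<in> rcosets (NN U)"
  have "\<forall>x\<in>C. \<beta> (\<alpha> x) = x" using ba rcos_sub[OF C] by auto
  then show ?thesis by (simp add: image_image)
qed
lemma ab_img: "C \<in> rcosets (NN U) \<Longrightarrow> \<alpha> ` (\<beta> ` C) = C"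
proof -
  assume C: "C \<in> rcosets (NN U)"
  have "\<forall>x\<in>C. \<alpha> (\<beta> x) = x" using ab rcos_sub[OF C] by auto
  then show ?thesis by (simp add: image_image)
qed

lemma aN_iso: "(\<lambda>C. \<alpha> ` C) \<in> iso (G Mod NN U) (G Mod NN U)"
proof -
  have hom: "(\<lambda>C. \<alpha> ` C) \<in> hom (G Mod NN U) (G Mod NN U)"
    unfolding hom_def
  proof (intro CollectI conjI ballI)
    show "(\<lambda>C. \<alpha> ` C) \<in> carrier (G Mod NN U) \<rightarrow> carrier (G Mod NN U)"
      using aN_maps by (simp add: Mod_carrier)
  next
    fix C D assume "C \<in> carrier (G Mod NN U)" "D \<in> carrier (G Mod NN U)"
    then have "C \<in> rcosets (NN U)" "D \<in> rcosets (NN U)" by (simp_all add: Mod_carrier)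
    then obtain x y where xy: "x \<in> carrier G" "y \<in> carrier G" "C = NN U #> x" "D = NN U #> y"
      unfolding RCOSETS_def by blast
    have "\<alpha> ` (C <#> D) = NN U #> \<alpha> (x \<otimes> y)" using normal.rcos_sum[OF Nn xy(1,2)] xy aN_rcos by simp
    also have "\<dots> = (NN U #> \<alpha> x) <#> (NN U #> \<alpha> y)"
      using normal.rcos_sum[OF Nn a_car[OF xy(1)] a_car[OF xy(2)]] a_hom xy by (simp add: hom_def)
    finally show "\<alpha> ` (C \<otimes>\<^bsub>G Mod NN U\<^esub> D) = \<alpha> ` C \<otimes>\<^bsub>G Mod NN U\<^esub> \<alpha> ` D"
      using xy aN_rcos by (simp add: Mod_mult)
  qed
  have "bij_betw (\<lambda>C. \<alpha> ` C) (rcosets (NN U)) (rcosets (NN U))"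
    unfolding bij_betw_def
  proof
    show "inj_on (\<lambda>C. \<alpha> ` C) (rcosets (NN U))" by (rule aN_inj)
    show "(\<lambda>C. \<alpha> ` C) ` (rcosets (NN U)) = rcosets (NN U)"
    proof (intro equalityI subsetI)
      fix D assume "D \<in> (\<lambda>C. \<alpha> ` C) ` (rcosets (NN U))"
      then show "D \<in> rcosets (NN U)" using aN_maps by blast
    next
      fix D assume D: "D \<in> rcosets (NN U)"
      then have "\<beta> ` D \<in> rcosets (NN U)" "\<alpha> ` (\<beta> ` D) = D" using bN_maps ab_img by auto
      then show "D \<in> (\<lambda>C. \<alpha> ` C) ` (rcosets (NN U))" by (metis image_eqI)
    qed
  qed
  then show ?thesis using hom by (simp add: iso_def Mod_carrier)
qed

lemma aN_homeo: "homeomorphic_map (qT (NN U)) (qT (NN U)) (\<lambda>C. \<alpha> ` C)"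
  unfolding homeomorphic_map_maps
proof (intro exI[of _ "\<lambda>C. \<beta> ` C"])
  show "homeomorphic_maps (qT (NN U)) (qT (NN U)) (\<lambda>C. \<alpha> ` C) (\<lambda>C. \<beta> ` C)"
    unfolding homeomorphic_maps_def
  proof (intro conjI ballI)
    show "continuous_map (qT (NN U)) (qT (NN U)) (\<lambda>C. \<alpha> ` C)"
      by (rule qT_pre_cont[OF Nc aN_maps a_cont aN_rcos])
    show "continuous_map (qT (NN U)) (qT (NN U)) (\<lambda>C. \<beta> ` C)"
      by (rule qT_pre_cont[OF Nc bN_maps b_cont bN_rcos])
  next
    fix C assume "C \<in> topspace (qT (NN U))"
    then show "\<beta> ` (\<alpha> ` C) = C" using ba_img qT_top[OF Nc] by simp
  next
    fix C assume "C \<in> topspace (qT (NN U))"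
    then show "\<alpha> ` (\<beta> ` C) = C" using ab_img qT_top[OF Nc] by simp
  qed
qed

lemma qT_cg: "compact_group (G Mod NN U) (qT (NN U))"
  unfolding compact_group_def topological_group_def
proof (intro conjI)
  show "group (G Mod NN U)" by (rule normal.factorgroup_is_group[OF Nn])
  show "topspace (qT (NN U)) = carrier (G Mod NN U)" by (simp add: qT_top[OF Nc] Mod_carrier)
  show "continuous_map (prod_topology (qT (NN U)) (qT (NN U))) (qT (NN U)) (\<lambda>(x, y). x \<otimes>\<^bsub>G Mod NN U\<^esub> y)"
    using qT_mult[OF Nn] by (simp add: Mod_mult)
  show "continuous_map (qT (NN U)) (qT (NN U)) (\<lambda>x. inv\<^bsub>G Mod NN U\<^esub> x)"
    by (rule qT_inv[OF Nn])
  show "compact_space (qT (NN U))" by (rule qT_compact[OF Nc])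
  show "Hausdorff_space (qT (NN U))" by (rule q_Haus)
qed

lemma aN_aut: "topgroup_automorphism (G Mod NN U) (qT (NN U)) (\<lambda>C. \<alpha> ` C)"
  unfolding topgroup_automorphism_def using aN_iso aN_homeo by blast

lemma invN: "x \<in> carrier G \<Longrightarrow> inv_into (carrier (G Mod NN U)) (\<lambda>C. \<alpha> ` C) (NN U #> x) = NN U #> \<beta> x"
proof -
  assume x: "x \<in> carrier G"
  show ?thesis
  proof (rule inv_into_f_eq)
    show "inj_on (\<lambda>C. \<alpha> ` C) (carrier (G Mod NN U))" using aN_inj by (simp add: Mod_carrier)
    show "NN U #> \<beta> x \<in> carrier (G Mod NN U)" using rcosetsI[OF Nc b_car[OF x]] by (simp add: Mod_carrier)
    show "\<alpha> ` (NN U #> \<beta> x) = NN U #> x" using aN_rcos[OF b_car[OF x]] ab[OF x] by simp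
  qed
qed

lemma apN: "x \<in> carrier G \<Longrightarrow> aut_power (G Mod NN U) (\<lambda>C. \<alpha> ` C) k (NN U #> x) = NN U #> p k x"
proof -
  assume x: "x \<in> carrier G"
  have A: "((\<lambda>C. \<alpha> ` C) ^^ n) (NN U #> x) = NN U #> (\<alpha> ^^ n) x" for n
    using funpow_rcos[of "\<lambda>C. \<alpha> ` C" "NN U" \<alpha> x n] aN_rcos a_car x by blast
  have B: "((inv_into (carrier (G Mod NN U)) (\<lambda>C. \<alpha> ` C)) ^^ n) (NN U #> x) = NN U #> (\<beta> ^^ n) x" for n
    using funpow_rcos[of "inv_into (carrier (G Mod NN U)) (\<lambda>C. \<alpha> ` C)" "NN U" \<beta> x n] invN b_car x by blast
  show ?thesis unfolding aut_power_def using A B by (simp add: \<beta>_def)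
qed

lemma fdN: "finite_depth (G Mod NN U) (qT (NN U)) (\<lambda>C. \<alpha> ` C)"
  unfolding finite_depth_def
proof (rule exI[of _ "(\<lambda>x. NN U #> x) ` U"], intro conjI)
  let ?V = "(\<lambda>x. NN U #> x) ` U"
  show "subgroup ?V (G Mod NN U)"
  proof (rule group.subgroupI[OF normal.factorgroup_is_group[OF Nn]])
    show "?V \<subseteq> carrier (G Mod NN U)"
    proof (rule image_subsetI)
      fix x assume "x \<in> U"
      then have "x \<in> carrier G" using Uc by blast
      then show "NN U #> x \<in> carrier (G Mod NN U)" using rcosetsI[OF Nc] by (simp add: Mod_carrier)
    qed
    show "?V \<noteq> {}" using subgroup.one_closed[OF Us'] by blast
  next
    fix C assume "C \<in> ?V"
    then obtain u where u: "u \<in> U" "C = NN U #> u" by blast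
    have uc: "u \<in> carrier G" using u(1) Uc by blast
    have "inv\<^bsub>G Mod NN U\<^esub> C = NN U #> inv u" using Mod_inv[OF Nn uc] u(2) by simp
    then show "inv\<^bsub>G Mod NN U\<^esub> C \<in> ?V" using imageI[OF subgroup.m_inv_closed[OF Us' u(1)]] by simp
  next
    fix C D assume "C \<in> ?V" "D \<in> ?V"
    then obtain u v where u: "u \<in> U" "C = NN U #> u" "v \<in> U" "D = NN U #> v" by blast
    have uc: "u \<in> carrier G" "v \<in> carrier G" using u(1,3) Uc by blast+
    have "C \<otimes>\<^bsub>G Mod NN U\<^esub> D = NN U #> (u \<otimes> v)"
      using normal.rcos_sum[OF Nn uc] u(2,4) by (simp add: Mod_mult)
    then show "C \<otimes>\<^bsub>G Mod NN U\<^esub> D \<in> ?V" using imageI[OF subgroup.m_closed[OF Us' u(1) u(3)]] by simp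
  qed
  show "openin (qT (NN U)) ?V" by (rule sat_open[OF Ns Uo Uc])
  show "(\<Inter>k::int. aut_power (G Mod NN U) (\<lambda>C. \<alpha> ` C) k ` ?V) = {\<one>\<^bsub>G Mod NN U\<^esub>}"
  proof (intro equalityI subsetI)
    fix E assume E: "E \<in> (\<Inter>k::int. aut_power (G Mod NN U) (\<lambda>C. \<alpha> ` C) k ` ?V)"
    have "E \<in> aut_power (G Mod NN U) (\<lambda>C. \<alpha> ` C) 0 ` ?V" using INT_D[OF E UNIV_I] .
    moreover have "aut_power (G Mod NN U) (\<lambda>C. \<alpha> ` C) 0 = id" by (simp add: aut_power_def)
    ultimately have "E \<in> ?V" by simp
    then obtain c where c: "c \<in> U" "E = NN U #> c" by (rule imageE)
    have cc: "c \<in> carrier G" using c(1) Uc by blast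
    have "p m c \<in> U" for m
    proof -
      have "E \<in> aut_power (G Mod NN U) (\<lambda>C. \<alpha> ` C) (- m) ` ?V" using INT_D[OF E UNIV_I] .
      then obtain D where D: "D \<in> ?V" "E = aut_power (G Mod NN U) (\<lambda>C. \<alpha> ` C) (- m) D" by (rule imageE)
      from D(1) obtain u where u: "u \<in> U" "D = NN U #> u" by (rule imageE)
      have uc: "u \<in> carrier G" using u(1) Uc by blast
      have pu: "p (- m) u \<in> carrier G" by (rule p_car[OF uc])
      have "NN U #> c = NN U #> p (- m) u" using D(2) u(2) c(2) apN[OF uc, of "- m"] by simp
      then have "c \<otimes> inv (p (- m) u) \<in> NN U" using rc_eq[OF Ns cc pu] by simp
      then have i: "p m (c \<otimes> inv (p (- m) u)) \<in> U" by (simp add: NN_def)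
      have "p m (c \<otimes> inv (p (- m) u)) = p m c \<otimes> inv (p m (p (- m) u))"
        using cc pu by (simp add: p_mult p_inv)
      also have "p m (p (- m) u) = u" using p_add[OF uc, of m "- m"] by (simp add: p0)
      finally have "p m c \<otimes> inv u \<in> U" using i by simp
      then have "p m c \<otimes> inv u \<otimes> u \<in> U" by (rule subgroup.m_closed[OF Us' _ u(1)])
      moreover have "p m c \<otimes> inv u \<otimes> u = p m c" using p_car[OF cc] uc by (simp add: m_assoc)
      ultimately show ?thesis by simp
    qed
    then have "c \<in> NN U" using cc by (simp add: NN_def)
    then have "E = NN U" using c(2) subgroup.rcos_const[OF Ns is_group] by simp
    then show "E \<in> {\<one>\<^bsub>G Mod NN U\<^esub>}" by (simp add: Mod_one)
  next
    fix E assume "E \<in> {\<one>\<^bsub>G Mod NN U\<^esub>}"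
    then have E: "E = NN U #> \<one>" using coset_mult_one[OF Nc] by (simp add: Mod_one)
    have Vone: "NN U #> \<one> \<in> ?V" using subgroup.one_closed[OF Us'] by (rule imageI)
    show "E \<in> (\<Inter>k::int. aut_power (G Mod NN U) (\<lambda>C. \<alpha> ` C) k ` ?V)"
    proof (rule INT_I)
      fix k :: int
      have "aut_power (G Mod NN U) (\<lambda>C. \<alpha> ` C) k (NN U #> \<one>) = E"
        using apN[OF one_closed, of k] E by (simp add: p_one)
      from image_eqI[where f="aut_power (G Mod NN U) (\<lambda>C. \<alpha> ` C) k", OF sym[OF this] Vone]
      show "E \<in> aut_power (G Mod NN U) (\<lambda>C. \<alpha> ` C) k ` ?V" .
    qed
  qed
qed

end


lemma qT_map_cont:
  assumes Nc: "N \<subseteq> carrier G" and N'c: "N' \<subseteq> carrier G"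
    and f: "\<And>C. C \<in> rcosets N \<Longrightarrow> f C \<in> rcosets N'"
    and fg: "\<And>x. x \<in> carrier G \<Longrightarrow> f (N #> x) = N' #> x"
  shows "continuous_map (qT N) (qT N') f"
  unfolding continuous_map_def
proof (intro conjI allI impI)
  show "f \<in> topspace (qT N) \<rightarrow> topspace (qT N')" using f qT_top[OF Nc] qT_top[OF N'c] by auto
next
  fix W assume W: "openin (qT N') W"
  have "{x \<in> carrier G. N #> x \<in> {C \<in> topspace (qT N). f C \<in> W}} = {x \<in> carrier G. N' #> x \<in> W}"
  proof (intro equalityI subsetI)
    fix x assume "x \<in> {x \<in> carrier G. N #> x \<in> {C \<in> topspace (qT N). f C \<in> W}}"
    then have x: "x \<in> carrier G" "f (N #> x) \<in> W" by auto
    then show "x \<in> {x \<in> carrier G. N' #> x \<in> W}" using fg by simp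
  next
    fix x assume "x \<in> {x \<in> carrier G. N' #> x \<in> W}"
    then have x: "x \<in> carrier G" "N' #> x \<in> W" by auto
    then show "x \<in> {x \<in> carrier G. N #> x \<in> {C \<in> topspace (qT N). f C \<in> W}}"
      using fg[OF x(1)] rcosetsI[OF Nc x(1)] qT_top[OF Nc] by simp
  qed
  moreover have "openin T {x \<in> carrier G. N' #> x \<in> W}" using W qT_open by blast
  moreover have "{C \<in> topspace (qT N). f C \<in> W} \<subseteq> rcosets N" using qT_top[OF Nc] by auto
  ultimately show "openin (qT N) {C \<in> topspace (qT N). f C \<in> W}" using qT_open by simp
qed

definition II :: "'a set set" where "II = {N. \<exists>U. U \<lhd> G \<and> openin T U \<and> N = NN U}"

lemma II_E: assumes "N \<in> II" obtains U where "U \<lhd> G" "openin T U" "N = NN U"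
  using assms unfolding II_def by blast

lemma II_normal: "N \<in> II \<Longrightarrow> N \<lhd> G" by (metis II_E Nn)
lemma II_sub: "N \<in> II \<Longrightarrow> subgroup N G" by (metis II_E Ns)
lemma II_car: "N \<in> II \<Longrightarrow> N \<subseteq> carrier G" by (metis II_E Nc)

lemma NN_Int: "NN (U1 \<inter> U2) = NN U1 \<inter> NN U2" unfolding NN_def by auto

lemma II_Int: "N1 \<in> II \<Longrightarrow> N2 \<in> II \<Longrightarrow> N1 \<inter> N2 \<in> II"
proof -
  assume "N1 \<in> II" "N2 \<in> II"
  then obtain U1 U2 where "U1 \<lhd> G" "openin T U1" "N1 = NN U1" "U2 \<lhd> G" "openin T U2" "N2 = NN U2"
    by (metis II_E)
  then show ?thesis unfolding II_def
    by (intro CollectI exI[of _ "U1 \<inter> U2"]) (simp add: NN_Int normal_subgroup_intersect openin_Int)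
qed

lemma carrier_normal: "carrier G \<lhd> G"
  unfolding normal_inv_iff using subgroup_self by auto

lemma II_ne: "NN (carrier G) \<in> II"
  unfolding II_def using carrier_normal openin_topspace[of T] topspace_T by auto

lemma II_sep: "z \<in> carrier G \<Longrightarrow> z \<noteq> \<one> \<Longrightarrow> \<exists>N\<in>II. z \<notin> N"
proof -
  assume z: "z \<in> carrier G" "z \<noteq> \<one>"
  obtain H where H: "subgroup H G" "openin T H" "z \<notin> H" using open_subgroup_sep[OF z] by blast
  obtain U where U: "U \<lhd> G" "openin T U" "U \<subseteq> H" using open_normal_sub[OF H(1,2)] by blast
  have "NN U \<in> II" unfolding II_def using U by blast
  moreover have "z \<notin> NN U"
  proof -
    have "p 0 z \<notin> U" using U(3) H(3) by (simp add: p0) blast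
    then show ?thesis unfolding NN_def by blast
  qed
  ultimately show ?thesis by blast
qed

lemma sub_mult_id: "subgroup N G \<Longrightarrow> subgroup M G \<Longrightarrow> M \<subseteq> N \<Longrightarrow> N <#> M = N"
proof -
  assume N: "subgroup N G" and M: "subgroup M G" and MN: "M \<subseteq> N"
  have "N <#> M \<subseteq> N <#> N" by (rule mono_set_mult[OF subset_refl MN])
  also have "\<dots> = N" by (rule subgroup_mult_id[OF N])
  finally have 1: "N <#> M \<subseteq> N" .
  have "N \<subseteq> N <#> M"
  proof
    fix n assume n: "n \<in> N"
    then have "n = n \<otimes> \<one>" using subgroup.subset[OF N] by auto
    then show "n \<in> N <#> M" using n subgroup.one_closed[OF M] unfolding set_mult_def by blast
  qed
  then show ?thesis using 1 by blast
qed

lemma key: "M \<in> II \<Longrightarrow> N \<in> II \<Longrightarrow> M \<subseteq> N \<Longrightarrow> x \<in> carrier G \<Longrightarrow> N <#> (M #> x) = N #> x"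
  using setmult_rcos_assoc[OF II_car II_car] sub_mult_id[OF II_sub II_sub] by simp

lemma key_rc: "M \<in> II \<Longrightarrow> N \<in> II \<Longrightarrow> M \<subseteq> N \<Longrightarrow> C \<in> rcosets M \<Longrightarrow> N <#> C \<in> rcosets N"
  unfolding RCOSETS_def using key II_car by auto

lemma aN_rcos': "N \<in> II \<Longrightarrow> x \<in> carrier G \<Longrightarrow> \<alpha> ` (N #> x) = N #> \<alpha> x"
  by (metis II_E aN_rcos)

lemma II_closed: "N \<in> II \<Longrightarrow> closedin T N" by (metis II_E NN_closed)

lemma directed_II: "directed_set II (\<lambda>N M. M \<subseteq> N)"
  unfolding directed_set_def using II_ne II_Int by blast

lemma directed_fin: "finite F \<Longrightarrow> F \<subseteq> II \<Longrightarrow> \<exists>M\<in>II. \<forall>N\<in>F. M \<subseteq> N"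
proof (induction F rule: finite_induct)
  case empty then show ?case using II_ne by blast
next
  case (insert N F)
  then obtain M where M: "M \<in> II" "\<forall>N\<in>F. M \<subseteq> N" by blast
  then have "M \<inter> N \<in> II" using II_Int insert by blast
  then show ?case using M by blast
qed


lemma II_cg: "N \<in> II \<Longrightarrow> compact_group (G Mod N) (qT N) \<and> topgroup_automorphism (G Mod N) (qT N) (\<lambda>C. \<alpha> ` C)"
  by (metis II_E qT_cg aN_aut)

lemma II_fd: "N \<in> II \<Longrightarrow> finite_depth (G Mod N) (qT N) (\<lambda>C. \<alpha> ` C)"
  by (metis II_E fdN)

lemma rc_obtain: assumes "C \<in> rcosets N" obtains x where "x \<in> carrier G" "C = N #> x"
  using assms unfolding RCOSETS_def by blast

lemma phi_props:
  assumes M: "M \<in> II" and N: "N \<in> II" and MN: "M \<subseteq> N"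
  shows "(\<lambda>C. N <#> C) \<in> hom (G Mod M) (G Mod N) \<and> continuous_map (qT M) (qT N) (\<lambda>C. N <#> C) \<and>
         (\<forall>x\<in>carrier (G Mod M). N <#> (\<alpha> ` x) = \<alpha> ` (N <#> x))"
proof (intro conjI ballI)
  show "(\<lambda>C. N <#> C) \<in> hom (G Mod M) (G Mod N)"
    unfolding hom_def
  proof (intro CollectI conjI ballI)
    show "(\<lambda>C. N <#> C) \<in> carrier (G Mod M) \<rightarrow> carrier (G Mod N)"
      using key_rc[OF M N MN] by (simp add: Mod_carrier)
  next
    fix C D assume "C \<in> carrier (G Mod M)" "D \<in> carrier (G Mod M)"
    then obtain x y where xy: "x \<in> carrier G" "y \<in> carrier G" "C = M #> x" "D = M #> y"
      by (metis Mod_carrier rc_obtain)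
    have "N <#> (C <#> D) = N #> (x \<otimes> y)"
      using xy normal.rcos_sum[OF II_normal[OF M]] key[OF M N MN] by simp
    also have "\<dots> = (N <#> C) <#> (N <#> D)"
      using xy normal.rcos_sum[OF II_normal[OF N]] key[OF M N MN] by simp
    finally show "N <#> (C \<otimes>\<^bsub>G Mod M\<^esub> D) = (N <#> C) \<otimes>\<^bsub>G Mod N\<^esub> (N <#> D)"
      by (simp add: Mod_mult)
  qed
  show "continuous_map (qT M) (qT N) (\<lambda>C. N <#> C)"
    by (rule qT_map_cont[OF II_car[OF M] II_car[OF N] key_rc[OF M N MN] key[OF M N MN]])
next
  fix C assume "C \<in> carrier (G Mod M)"
  then obtain x where x: "x \<in> carrier G" "C = M #> x" by (metis Mod_carrier rc_obtain)
  show "N <#> (\<alpha> ` C) = \<alpha> ` (N <#> C)"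
    using x aN_rcos'[OF M] aN_rcos'[OF N] key[OF M N MN] a_car by simp
qed

lemma inv_sys: "inverse_system_aut II (\<lambda>N M. M \<subseteq> N) (\<lambda>N. G Mod N) qT (\<lambda>N C. \<alpha> ` C) (\<lambda>N M C. N <#> C)"
  unfolding inverse_system_aut_def
proof (intro conjI)
  show "directed_set II (\<lambda>N M. M \<subseteq> N)" by (rule directed_II)
  show "\<forall>i\<in>II. compact_group (G Mod i) (qT i) \<and> topgroup_automorphism (G Mod i) (qT i) (\<lambda>C. \<alpha> ` C)"
    using II_cg by blast
  show "\<forall>i\<in>II. \<forall>j\<in>II. j \<subseteq> i \<longrightarrow>
       (\<lambda>C. i <#> C) \<in> hom (G Mod j) (G Mod i) \<and> continuous_map (qT j) (qT i) (\<lambda>C. i <#> C) \<and>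
       (\<forall>x\<in>carrier (G Mod j). i <#> (\<alpha> ` x) = \<alpha> ` (i <#> x))"
    using phi_props by blast
  show "\<forall>i\<in>II. \<forall>x\<in>carrier (G Mod i). i <#> x = x"
  proof (intro ballI)
    fix i C assume i: "i \<in> II" and "C \<in> carrier (G Mod i)"
    then obtain x where x: "x \<in> carrier G" "C = i #> x" by (metis Mod_carrier rc_obtain)
    then show "i <#> C = C" using key[OF i i subset_refl x(1)] by simp
  qed
  show "\<forall>i\<in>II. \<forall>j\<in>II. \<forall>k\<in>II. j \<subseteq> i \<longrightarrow> k \<subseteq> j \<longrightarrow> (\<forall>x\<in>carrier (G Mod k). i <#> (j <#> x) = i <#> x)"
  proof (intro ballI impI)
    fix i j k C assume ijk: "i \<in> II" "j \<in> II" "k \<in> II" "j \<subseteq> i" "k \<subseteq> j" and "C \<in> carrier (G Mod k)"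
    then obtain x where x: "x \<in> carrier G" "C = k #> x" by (metis Mod_carrier rc_obtain)
    have "k \<subseteq> i" using ijk by blast
    then show "i <#> (j <#> C) = i <#> C"
      using x key[OF ijk(2,1,4) x(1)] key[OF ijk(3,2,5) x(1)] key[OF ijk(3,1) _ x(1)] by simp
  qed
qed


abbreviation "LL \<equiv> inv_limit II (\<lambda>N M. M \<subseteq> N) (\<lambda>N. G Mod N) (\<lambda>N M C. N <#> C)"
definition "Phi = (\<lambda>x. \<lambda>N\<in>II. N #> x)"

lemma LL_carrier: "carrier LL = {f \<in> (\<Pi>\<^sub>E i\<in>II. rcosets i). \<forall>i\<in>II. \<forall>j\<in>II. j \<subseteq> i \<longrightarrow> i <#> f j = f i}"
  by (simp add: inv_limit_def Mod_carrier)

lemma Phi_car: "x \<in> carrier G \<Longrightarrow> Phi x \<in> carrier LL"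
  unfolding LL_carrier Phi_def using rcosetsI[OF II_car] key by auto

lemma Phi_hom: "Phi \<in> hom G LL"
  unfolding hom_def
proof (intro CollectI conjI ballI)
  show "Phi \<in> carrier G \<rightarrow> carrier LL" using Phi_car by blast
next
  fix x y assume xy: "x \<in> carrier G" "y \<in> carrier G"
  have e: "i #> (x \<otimes> y) = (i #> x) <#> (i #> y)" if i: "i \<in> II" for i
    using normal.rcos_sum[OF II_normal[OF i] xy] by simp
  have "Phi (x \<otimes> y) = (\<lambda>i\<in>II. Phi x i \<otimes>\<^bsub>G Mod i\<^esub> Phi y i)"
    unfolding Phi_def Mod_mult by (rule restrict_ext) (simp add: e)
  then show "Phi (x \<otimes> y) = Phi x \<otimes>\<^bsub>LL\<^esub> Phi y" by (simp add: inv_limit_def)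
qed

lemma Phi_inj: "inj_on Phi (carrier G)"
proof (rule inj_onI)
  fix x y assume x: "x \<in> carrier G" and y: "y \<in> carrier G" and e: "Phi x = Phi y"
  have "x \<otimes> inv y = \<one>"
  proof (rule ccontr)
    assume "x \<otimes> inv y \<noteq> \<one>"
    then obtain N where N: "N \<in> II" "x \<otimes> inv y \<notin> N" using II_sep[of "x \<otimes> inv y"] x y by auto
    have "N #> x = N #> y" using fun_cong[OF e, of N] N(1) unfolding Phi_def by simp
    then show False using N rc_eq[OF II_sub[OF N(1)] x y] by simp
  qed
  moreover have "x = x \<otimes> inv y \<otimes> y" using x y by (simp add: m_assoc)
  ultimately show "x = y" using y by simp
qed

lemma rcos_closed: "N \<in> II \<Longrightarrow> a \<in> carrier G \<Longrightarrow> closedin T (N #> a)"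
  using rcos_as_pre[OF II_sub] closed_pre[OF rmult_cont[of "inv a"] II_closed] by simp

lemma Phi_surj: "carrier LL \<subseteq> Phi ` carrier G"
proof
  fix f assume f: "f \<in> carrier LL"
  then have fP: "f \<in> (\<Pi>\<^sub>E i\<in>II. rcosets i)" and fc: "\<And>i j. i \<in> II \<Longrightarrow> j \<in> II \<Longrightarrow> j \<subseteq> i \<Longrightarrow> i <#> f j = f i"
    unfolding LL_carrier by auto
  have fr: "\<exists>a\<in>carrier G. f N = N #> a" if "N \<in> II" for N
    using fP that unfolding RCOSETS_def by auto
  have fcl: "closedin T (f N)" if "N \<in> II" for N using fr[OF that] rcos_closed[OF that] by auto
  have sub: "f M \<subseteq> f N" if MN: "M \<in> II" "N \<in> II" "M \<subseteq> N" for M N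
  proof
    fix y assume y: "y \<in> f M"
    obtain a where a: "a \<in> carrier G" "f M = M #> a" using fr[OF MN(1)] by blast
    have "y \<in> carrier G" using y a r_coset_subset_G[OF II_car[OF MN(1)]] by blast
    then have "y = \<one> \<otimes> y" by simp
    then have "y \<in> N <#> f M" using y subgroup.one_closed[OF II_sub[OF MN(2)]] unfolding set_mult_def by blast
    then show "y \<in> f N" using fc[OF MN(2,1,3)] by simp
  qed
  have ne: "f M \<noteq> {}" if "M \<in> II" for M
    using fr[OF that] rcos_self[OF _ II_sub[OF that]] by blast
  have "\<Inter>(f ` II) \<noteq> {}"
    using cpt unfolding compact_space_fip
  proof (elim allE impE)
    show "(\<forall>C\<in>f ` II. closedin T C) \<and> (\<forall>\<F>. finite \<F> \<and> \<F> \<subseteq> f ` II \<longrightarrow> \<Inter>\<F> \<noteq> {})"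
    proof (intro conjI allI impI ballI)
      fix C assume "C \<in> f ` II" then show "closedin T C" using fcl by blast
    next
      fix \<F> assume F: "finite \<F> \<and> \<F> \<subseteq> f ` II"
      then obtain F where F': "F \<subseteq> II" "finite F" "\<F> = f ` F" using finite_subset_image by metis
      obtain M where M: "M \<in> II" "\<forall>N\<in>F. M \<subseteq> N" using directed_fin[OF F'(2,1)] by blast
      have "f M \<subseteq> \<Inter>\<F>" using sub M F' by blast
      then show "\<Inter>\<F> \<noteq> {}" using ne[OF M(1)] by blast
    qed
  qed
  then obtain x where x: "x \<in> \<Inter>(f ` II)" by blast
  have xc: "x \<in> carrier G"
  proof -
    have "x \<in> f (NN (carrier G))" using x II_ne by blast
    then show ?thesis using fr[OF II_ne] r_coset_subset_G[OF II_car[OF II_ne]] by blast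
  qed
  have "f N = N #> x" if N: "N \<in> II" for N
  proof -
    obtain a where a: "a \<in> carrier G" "f N = N #> a" using fr[OF N] by blast
    have "x \<in> N #> a" using x N a by blast
    then show ?thesis using repr_independence[OF _ a(1) II_sub[OF N]] a by simp
  qed
  then have "f = Phi x" unfolding Phi_def using fP by (auto simp: fun_eq_iff PiE_def extensional_def)
  then show "f \<in> Phi ` carrier G" using xc by blast
qed

lemma Phi_img: "Phi ` carrier G = carrier LL" using Phi_surj Phi_car by blast

lemma Phi_iso: "Phi \<in> iso G LL"
  unfolding iso_def bij_betw_def using Phi_hom Phi_inj Phi_img by blast

lemma Phi_homeo: "homeomorphic_map T (inv_limit_topology II (\<lambda>N M. M \<subseteq> N) (\<lambda>N. G Mod N) qT (\<lambda>N M C. N <#> C)) Phi"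
proof (rule continuous_imp_homeomorphic_map)
  have tp: "topspace (product_topology qT II) = (\<Pi>\<^sub>E i\<in>II. rcosets i)"
    unfolding topspace_product_topology by (rule PiE_cong) (simp add: qT_top[OF II_car])
  have Lsub: "carrier LL \<subseteq> topspace (product_topology qT II)" unfolding tp LL_carrier by blast
  have top: "topspace (inv_limit_topology II (\<lambda>N M. M \<subseteq> N) (\<lambda>N. G Mod N) qT (\<lambda>N M C. N <#> C)) = carrier LL"
    unfolding inv_limit_topology_def topspace_subtopology using Lsub by blast
  have "continuous_map T (product_topology qT II) Phi"
    unfolding continuous_map_componentwise
  proof (intro conjI ballI)
    show "Phi ` topspace T \<subseteq> extensional II" unfolding Phi_def by (rule image_subsetI) simp
  next
    fix k assume k: "k \<in> II"
    have "continuous_map T (qT k) (\<lambda>x. k #> x)" by (rule q_cont[OF II_car[OF k]])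
    then show "continuous_map T (qT k) (\<lambda>x. Phi x k)"
      using k unfolding Phi_def by simp
  qed
  moreover have "Phi \<in> topspace T \<rightarrow> carrier LL" using Phi_car topspace_T by (simp add: Pi_iff)
  ultimately show "continuous_map T (inv_limit_topology II (\<lambda>N M. M \<subseteq> N) (\<lambda>N. G Mod N) qT (\<lambda>N M C. N <#> C)) Phi"
    unfolding inv_limit_topology_def continuous_map_in_subtopology by (rule conjI)
  show "compact_space T" by (rule cpt)
  have "\<forall>i\<in>II. Hausdorff_space (qT i)" using II_cg by (simp add: compact_group_def)
  then have "Hausdorff_space (product_topology qT II)"
    unfolding Hausdorff_space_product_topology by (rule disjI2)
  then show "Hausdorff_space (inv_limit_topology II (\<lambda>N M. M \<subseteq> N) (\<lambda>N. G Mod N) qT (\<lambda>N M C. N <#> C))"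
    unfolding inv_limit_topology_def by (rule Hausdorff_space_subtopology)
  show "Phi ` topspace T = topspace (inv_limit_topology II (\<lambda>N M. M \<subseteq> N) (\<lambda>N. G Mod N) qT (\<lambda>N M C. N <#> C))"
    unfolding top using Phi_img topspace_T by simp
  show "inj_on Phi (topspace T)" using Phi_inj topspace_T by simp
qed

lemma Phi_aut: "x \<in> carrier G \<Longrightarrow> Phi (\<alpha> x) = inv_limit_aut II (\<lambda>N C. \<alpha> ` C) (Phi x)"
  unfolding Phi_def inv_limit_aut_def using aN_rcos' by (auto simp: fun_eq_iff)

lemma main:
  "\<exists>(I :: 'a set set) (rel :: 'a set \<Rightarrow> 'a set \<Rightarrow> bool)
            (Gs :: 'a set \<Rightarrow> 'a set monoid) (Ts :: 'a set \<Rightarrow> 'a set topology)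
            (\<alpha>s :: 'a set \<Rightarrow> 'a set \<Rightarrow> 'a set) (\<phi> :: 'a set \<Rightarrow> 'a set \<Rightarrow> 'a set \<Rightarrow> 'a set).
           inverse_system_aut I rel Gs Ts \<alpha>s \<phi> \<and>
           (\<forall>i\<in>I. finite_depth (Gs i) (Ts i) (\<alpha>s i)) \<and>
           (\<exists>\<Phi>. \<Phi> \<in> iso G (inv_limit I rel Gs \<phi>) \<and>
                 homeomorphic_map T (inv_limit_topology I rel Gs Ts \<phi>) \<Phi> \<and>
                 (\<forall>x\<in>carrier G. \<Phi> (\<alpha> x) = inv_limit_aut I \<alpha>s (\<Phi> x)))"
  apply (rule exI[of _ II], rule exI[of _ "\<lambda>N M. M \<subseteq> N"], rule exI[of _ "\<lambda>N. G Mod N"],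
      rule exI[of _ qT], rule exI[of _ "\<lambda>N C. \<alpha> ` C"], rule exI[of _ "\<lambda>N M C. N <#> C"])
  using inv_sys II_fd Phi_iso Phi_homeo Phi_aut by blast

end

theorem proposition5p3:
  fixes G :: "('a, 'b) monoid_scheme" and T :: "'a topology" and \<alpha> :: "'a \<Rightarrow> 'a"
  assumes "compact_group G T"
    and "totally_disconnected_space T"
    and "topgroup_automorphism G T \<alpha>"
  shows "\<exists>(I :: 'a set set) (rel :: 'a set \<Rightarrow> 'a set \<Rightarrow> bool)
            (Gs :: 'a set \<Rightarrow> 'a set monoid) (Ts :: 'a set \<Rightarrow> 'a set topology)
            (\<alpha>s :: 'a set \<Rightarrow> 'a set \<Rightarrow> 'a set) (\<phi> :: 'a set \<Rightarrow> 'a set \<Rightarrow> 'a set \<Rightarrow> 'a set).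
           inverse_system_aut I rel Gs Ts \<alpha>s \<phi> \<and>
           (\<forall>i\<in>I. finite_depth (Gs i) (Ts i) (\<alpha>s i)) \<and>
           (\<exists>\<Phi>. \<Phi> \<in> iso G (inv_limit I rel Gs \<phi>) \<and>
                 homeomorphic_map T (inv_limit_topology I rel Gs Ts \<phi>) \<Phi> \<and>
                 (\<forall>x\<in>carrier G. \<Phi> (\<alpha> x) = inv_limit_aut I \<alpha>s (\<Phi> x)))"
proof -
  have "group G" using assms(1) by (simp add: compact_group_def topological_group_def)
  then interpret pcg G T \<alpha> by (rule pcg.intro) (simp add: pcg_axioms_def assms)
  show ?thesis by (rule main)
qed

end
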